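(* Let $G_1$ and $G_2$ be graphs (each with at least two vertices) such that $\lambda(G_1)=-\iota(G_1)$ and $\lambda(G_2)=-\iota(G_2)$. Then $\lambda(G_1\Box G_2)=-\iota(G_1\Box G_2)$.
   Context: All graphs are finite and simple; $\lambda(G)$ denotes the smallest eigenvalue of the adjacency matrix of $G$. The average degree of a graph $T$ is $\overline{d}(T)=2|E(T)|/|V(T)|$, and $\iota(G)=\max\{\overline{d}(H): H \text{ an induced bipartite subgraph of } G\}$. The Cartesian product $G_1\Box G_2$ has vertex set $V(G_1)\times V(G_2)$, with $(v_1,w_1)$ adjacent to $(v_2,w_2)$ iff either $v_1=v_2$ and $\{w_1,w_2\}\in E(G_2)$, or $w_1=w_2$ and $\{v_1,v_2\}\in E(G_1)$. *)

theory Defs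
  imports "HOL-Analysis.Analysis"
begin

definition simple_graph :: "('v::finite \<Rightarrow> 'v \<Rightarrow> bool) \<Rightarrow> bool" where
  "simple_graph G \<longleftrightarrow> (\<forall>u v. G u v \<longrightarrow> G v u) \<and> (\<forall>v. \<not> G v v)"

definition adj_matrix :: "('v::finite \<Rightarrow> 'v \<Rightarrow> bool) \<Rightarrow> real ^ 'v ^ 'v" where
  "adj_matrix G = (\<chi> u v. if G u v then 1 else 0)"

definition mat_eigenvalue :: "real ^ 'n ^ 'n \<Rightarrow> real \<Rightarrow> bool" where
  "mat_eigenvalue A k \<longleftrightarrow> (\<exists>x. x \<noteq> 0 \<and> A *v x = k *\<^sub>R x)"

text \<open>Smallest eigenvalue of the adjacency matrix (all eigenvalues are real since the
  matrix is real symmetric).\<close>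
definition min_eig :: "('v::finite \<Rightarrow> 'v \<Rightarrow> bool) \<Rightarrow> real" where
  "min_eig G = Min {k. mat_eigenvalue (adj_matrix G) k}"

definition induced_edges :: "('v \<Rightarrow> 'v \<Rightarrow> bool) \<Rightarrow> 'v set \<Rightarrow> 'v set set" where
  "induced_edges G S = {{u, v} | u v. u \<in> S \<and> v \<in> S \<and> G u v}"

definition avg_degree :: "('v \<Rightarrow> 'v \<Rightarrow> bool) \<Rightarrow> 'v set \<Rightarrow> real" where
  "avg_degree G S = 2 * real (card (induced_edges G S)) / real (card S)"

definition induced_bipartite :: "('v \<Rightarrow> 'v \<Rightarrow> bool) \<Rightarrow> 'v set \<Rightarrow> bool" where
  "induced_bipartite G S \<longleftrightarrow> (\<exists>A B. A \<inter> B = {} \<and> A \<union> B = S \<and>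
      (\<forall>u\<in>A. \<forall>v\<in>A. \<not> G u v) \<and> (\<forall>u\<in>B. \<forall>v\<in>B. \<not> G u v))"

definition iota :: "('v::finite \<Rightarrow> 'v \<Rightarrow> bool) \<Rightarrow> real" where
  "iota G = Max {avg_degree G S | S. S \<noteq> {} \<and> induced_bipartite G S}"

definition cart_prod :: "('a \<Rightarrow> 'a \<Rightarrow> bool) \<Rightarrow> ('b \<Rightarrow> 'b \<Rightarrow> bool) \<Rightarrow> ('a \<times> 'b \<Rightarrow> 'a \<times> 'b \<Rightarrow> bool)" where
  "cart_prod G1 G2 = (\<lambda>(v1, w1) (v2, w2). (v1 = v2 \<and> G2 w1 w2) \<or> (w1 = w2 \<and> G1 v1 v2))"

end

theory Submission
  imports Defs
begin


lemma sym_quad: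
  fixes A :: "real^'n^'n" assumes "transpose A = A"
  shows "x \<bullet> (A *v y) = y \<bullet> (A *v x)"
proof -
  have "x \<bullet> (A *v y) = (x v* A) \<bullet> y" by (simp add: dot_lmul_matrix)
  also have "x v* A = A *v x" by (metis assms vector_transpose_matrix)
  finally show ?thesis by (simp add: inner_commute)
qed

lemma sym_min_exists:
  fixes A :: "real^'n^'n" assumes sym: "transpose A = A"
  shows "\<exists>m x. x \<noteq> 0 \<and> A *v x = m *\<^sub>R x \<and> (\<forall>y. m * (y \<bullet> y) \<le> y \<bullet> (A *v y))"
proof -
  define q where "q y = y \<bullet> (A *v y)" for y
  have cont: "continuous_on (sphere 0 1) q" unfolding q_def
    by (intro continuous_intros linear_continuous_on matrix_vector_mul_bounded_linear)
  obtain x0 where x0: "x0 \<in> sphere 0 1" and min: "\<And>y. y \<in> sphere 0 1 \<Longrightarrow> q x0 \<le> q y"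
    using continuous_attains_inf[OF compact_sphere _ cont] by auto
  define m where "m = q x0"
  have nx0: "norm x0 = 1" using x0 by simp
  have x0x0: "x0 \<bullet> x0 = 1" using nx0 by (simp add: dot_square_norm)  
  have qs: "q (c *\<^sub>R y) = c^2 * q y" for c y
    by (simp add: q_def matrix_vector_mult_scaleR power2_eq_square)
  have lb: "m * (y \<bullet> y) \<le> q y" for y
  proof (cases "y = 0")
    case True then show ?thesis by (simp add: q_def)
  next
    case False
    define u where "u = (1 / norm y) *\<^sub>R y"
    have "u \<in> sphere 0 1" using False by (simp add: u_def)
    then have "m \<le> q u" using min m_def by simp
    also have "q u = q y / (norm y)^2" by (simp add: u_def qs power_divide)
    finally have "m * (norm y)^2 \<le> q y" using False by (simp add: field_simps)
    then show ?thesis by (simp add: power2_norm_eq_inner)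
  qed
  define z where "z = A *v x0 - m *\<^sub>R x0"
  define c where "c = q z - m * (z \<bullet> z)"
  have zz0: "z \<bullet> z = z \<bullet> (A *v x0) - m * (z \<bullet> x0)"
    by (metis inner_diff_right inner_scaleR_right z_def)
  have zz: "z \<bullet> z = z \<bullet> (A *v x0) - m * (x0 \<bullet> z)"
    using zz0 by (simp add: inner_commute[of z x0])
  have key: "0 \<le> 2 * t * (z \<bullet> z) + t^2 * c" for t
  proof -
    have h: "m * ((x0 + t *\<^sub>R z) \<bullet> (x0 + t *\<^sub>R z)) \<le> q (x0 + t *\<^sub>R z)" by (rule lb)
    have e1: "(x0 + t *\<^sub>R z) \<bullet> (x0 + t *\<^sub>R z) = 1 + 2 * t * (x0 \<bullet> z) + t^2 * (z \<bullet> z)"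
      by (simp add: inner_add_left inner_add_right x0x0 inner_commute power2_eq_square algebra_simps)
    have sq: "x0 \<bullet> (A *v z) = z \<bullet> (A *v x0)" by (rule sym_quad[OF sym])
    have e2: "q (x0 + t *\<^sub>R z) = m + 2 * t * (z \<bullet> (A *v x0)) + t^2 * q z"
      using sq by (simp add: q_def m_def matrix_vector_right_distrib matrix_vector_mult_scaleR
          inner_add_left inner_add_right power2_eq_square algebra_simps)
    show ?thesis using h unfolding e1 e2 zz c_def by (simp add: algebra_simps)
  qed
  have "z = 0"
  proof (rule ccontr)
    assume "z \<noteq> 0"
    define a where "a = z \<bullet> z"
    have a: "a > 0" using \<open>z \<noteq> 0\<close> by (simp add: a_def)
    define s where "s = a / (\<bar>c\<bar> + 1)"
    have s: "s > 0" using a by (simp add: s_def)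
    have "s * \<bar>c\<bar> < a" using a by (simp add: s_def field_simps)
    have "0 \<le> 2 * (-s) * a + (-s)^2 * c" using key[of "-s"] by (simp add: a_def)
    also have "\<dots> \<le> s * (-2 * a + s * \<bar>c\<bar>)"
      using s by (simp add: power2_eq_square algebra_simps mult_left_mono abs_ge_self)
    also have "\<dots> < 0" using s \<open>s * \<bar>c\<bar> < a\<close> a by (simp add: mult_pos_neg)
    finally show False by simp
  qed
  then have "A *v x0 = m *\<^sub>R x0" by (simp add: z_def)
  moreover have "x0 \<noteq> 0" using nx0 by auto
  ultimately show ?thesis using lb unfolding q_def by blast
qed

lemma sym_eig_finite:
  fixes A :: "real^'n^'n" assumes sym: "transpose A = A"
  shows "finite {k. mat_eigenvalue A k}"
proof -
  define E where "E = {k. mat_eigenvalue A k}"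
  define v where "v k = (SOME x. x \<noteq> 0 \<and> A *v x = k *\<^sub>R x)" for k
  have v: "v k \<noteq> 0 \<and> A *v v k = k *\<^sub>R v k" if "k \<in> E" for k
  proof -
    from that obtain x where "x \<noteq> 0 \<and> A *v x = k *\<^sub>R x" unfolding E_def mat_eigenvalue_def by auto
    then show ?thesis unfolding v_def by (rule someI)
  qed
  have inj: "inj_on v E"
  proof (rule inj_onI)
    fix k l assume kl: "k \<in> E" "l \<in> E" "v k = v l"
    then have "k *\<^sub>R v k = l *\<^sub>R v k" using v by metis
    then show "k = l" using v[OF kl(1)] by simp
  qed
  have orth: "pairwise orthogonal (v ` E)"
    unfolding pairwise_def orthogonal_def
  proof clarify
    fix k l assume kl: "k \<in> E" "l \<in> E" "v k \<noteq> v l"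
    then have "k \<noteq> l" by auto
    have "k * (v k \<bullet> v l) = (A *v v k) \<bullet> v l" using v[OF kl(1)] by simp
    also have "\<dots> = v l \<bullet> (A *v v k)" by (simp add: inner_commute)
    also have "\<dots> = v k \<bullet> (A *v v l)" using sym_quad[OF sym] by simp
    also have "\<dots> = l * (v k \<bullet> v l)" using v[OF kl(2)] by simp
    finally show "v k \<bullet> v l = 0" using \<open>k \<noteq> l\<close> by simp
  qed
  have "0 \<notin> v ` E" using v by auto
  then have "independent (v ` E)" using pairwise_orthogonal_independent[OF orth] by blast
  then have "finite (v ` E)" by (rule independent_imp_finite)
  then show ?thesis using finite_imageD inj E_def by blast
qed

lemma sym_min_eig:
  fixes A :: "real^'n^'n" assumes sym: "transpose A = A"
  shows "(\<forall>y. Min {k. mat_eigenvalue A k} * (y \<bullet> y) \<le> y \<bullet> (A *v y))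
     \<and> (\<exists>x. x \<noteq> 0 \<and> A *v x = Min {k. mat_eigenvalue A k} *\<^sub>R x)"
proof -
  obtain m x where x: "x \<noteq> 0" "A *v x = m *\<^sub>R x" and lb: "\<And>y. m * (y \<bullet> y) \<le> y \<bullet> (A *v y)"
    using sym_min_exists[OF sym] by blast
  have "Min {k. mat_eigenvalue A k} = m"
  proof (rule Min_eqI)
    show "finite {k. mat_eigenvalue A k}" by (rule sym_eig_finite[OF sym])
    show "m \<in> {k. mat_eigenvalue A k}" using x by (auto simp: mat_eigenvalue_def)
    fix k assume "k \<in> {k. mat_eigenvalue A k}"
    then obtain y where y: "y \<noteq> 0" "A *v y = k *\<^sub>R y" by (auto simp: mat_eigenvalue_def)
    have "m * (y \<bullet> y) \<le> k * (y \<bullet> y)" using lb[of y] y by simp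
    moreover have "y \<bullet> y > 0" using y by simp
    ultimately show "m \<le> k" by simp
  qed
  then show ?thesis using x lb by auto
qed

definition Qs :: "('v \<Rightarrow> 'v \<Rightarrow> bool) \<Rightarrow> 'v set \<Rightarrow> ('v \<Rightarrow> real) \<Rightarrow> real" where
  "Qs G S f = (\<Sum>u\<in>S. \<Sum>v\<in>S. if G u v then f u * f v else 0)"

lemma quad_adj: "x \<bullet> (adj_matrix G *v x) = Qs G UNIV (\<lambda>u. x $ u)"
proof -
  have "x \<bullet> (adj_matrix G *v x) = (\<Sum>i\<in>UNIV. x$i * (\<Sum>n\<in>UNIV. (if G i n then 1 else 0) * x$n))"
    by (simp add: inner_vec_def matrix_vector_mult_def adj_matrix_def)
  also have "\<dots> = Qs G UNIV (\<lambda>u. x $ u)" unfolding Qs_def sum_distrib_left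
    by (intro sum.cong refl) auto
  finally show ?thesis .
qed

lemma adj_sym: "simple_graph G \<Longrightarrow> transpose (adj_matrix G) = adj_matrix G"
  unfolding simple_graph_def transpose_def adj_matrix_def by (auto simp: vec_eq_iff)

lemma graph_min_eig:
  fixes G :: "'v::finite \<Rightarrow> 'v \<Rightarrow> bool"
  assumes "simple_graph G"
  shows "\<forall>f. min_eig G * (\<Sum>u\<in>UNIV. (f u)^2) \<le> Qs G UNIV f"
    and "\<exists>f. (\<Sum>u\<in>UNIV. (f u)^2) \<noteq> 0 \<and> Qs G UNIV f = min_eig G * (\<Sum>u\<in>UNIV. (f u)^2)"
proof -
  note M = sym_min_eig[OF adj_sym[OF assms]]
  show "\<forall>f. min_eig G * (\<Sum>u\<in>UNIV. (f u)^2) \<le> Qs G UNIV f"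
  proof
    fix f :: "'v \<Rightarrow> real"
    define y where "y = (\<chi> u. f u)"
    have "min_eig G * (y \<bullet> y) \<le> y \<bullet> (adj_matrix G *v y)" using M by (simp add: min_eig_def)
    moreover have "y \<bullet> (adj_matrix G *v y) = Qs G UNIV f"
    proof -
      have "(\<lambda>u. y $ u) = f" by (simp add: y_def)
      then show ?thesis by (simp add: quad_adj)
    qed
    moreover have "y \<bullet> y = (\<Sum>u\<in>UNIV. (f u)^2)" by (simp add: y_def inner_vec_def power2_eq_square)
    ultimately show "min_eig G * (\<Sum>u\<in>UNIV. (f u)^2) \<le> Qs G UNIV f" by simp
  qed
  obtain x where x: "x \<noteq> 0" "adj_matrix G *v x = min_eig G *\<^sub>R x" using M by (auto simp: min_eig_def)
  have xx: "x \<bullet> x = (\<Sum>u\<in>UNIV. (x $ u)^2)" by (simp add: inner_vec_def power2_eq_square)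
  have "Qs G UNIV (\<lambda>u. x $ u) = x \<bullet> (adj_matrix G *v x)" by (simp add: quad_adj)
  also have "\<dots> = min_eig G * (x \<bullet> x)" using x by simp
  finally show "\<exists>f. (\<Sum>u\<in>UNIV. (f u)^2) \<noteq> 0 \<and> Qs G UNIV f = min_eig G * (\<Sum>u\<in>UNIV. (f u)^2)"
    using x xx inner_eq_zero_iff[of x] by (intro exI[of _ "\<lambda>u. x $ u"]) simp
qed

lemma Qs_restrict:
  fixes G :: "'v::finite \<Rightarrow> 'v \<Rightarrow> bool"
  shows "Qs G S f = Qs G UNIV (\<lambda>u. if u \<in> S then f u else 0)"
proof -
  have "Qs G UNIV (\<lambda>u. if u \<in> S then f u else 0)
      = (\<Sum>u\<in>S. \<Sum>v\<in>UNIV. if G u v then (if u \<in> S then f u else 0) * (if v \<in> S then f v else 0) else 0)"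
    unfolding Qs_def by (rule sum.mono_neutral_right) (auto intro: sum.neutral)
  also have "\<dots> = (\<Sum>u\<in>S. \<Sum>v\<in>S. if G u v then (if u \<in> S then f u else 0) * (if v \<in> S then f v else 0) else 0)"
    by (intro sum.cong refl sum.mono_neutral_right) auto
  also have "\<dots> = Qs G S f" unfolding Qs_def by (intro sum.cong refl) auto
  finally show ?thesis by simp
qed

lemma count_edges:
  assumes G: "simple_graph G" and S: "finite S"
  shows "Qs G S (\<lambda>_. 1) = 2 * real (card (induced_edges G S))"
proof -
  define D where "D = {p \<in> S \<times> S. G (fst p) (snd p)}"
  have fD: "finite D" using S by (simp add: D_def)
  have "Qs G S (\<lambda>_. 1) = (\<Sum>p\<in>S \<times> S. if G (fst p) (snd p) then 1 else 0)"
    unfolding Qs_def sum.cartesian_product by (intro sum.cong refl) (auto simp: case_prod_beta)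
  also have "\<dots> = (\<Sum>p\<in>D. 1)" unfolding D_def
    by (subst sum.inter_filter[symmetric]) (use S in auto)
  also have "\<dots> = (\<Sum>e\<in>induced_edges G S. \<Sum>p\<in>{p \<in> D. {fst p, snd p} = e}. 1)"
  proof (rule sum.group[symmetric, OF fD])
    have "induced_edges G S \<subseteq> (\<lambda>(u,v). {u,v}) ` (S \<times> S)"
      unfolding induced_edges_def by auto
    then show "finite (induced_edges G S)" using S finite_subset by blast
    show "(\<lambda>p. {fst p, snd p}) ` D \<subseteq> induced_edges G S"
    proof
      fix e assume "e \<in> (\<lambda>p. {fst p, snd p}) ` D"
      then obtain a b where "e = {a,b}" "a \<in> S" "b \<in> S" "G a b" unfolding D_def by auto
      then show "e \<in> induced_edges G S" unfolding induced_edges_def by blast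
    qed
  qed
  also have "\<dots> = (\<Sum>e\<in>induced_edges G S. 2)"
  proof (rule sum.cong[OF refl])
    fix e assume "e \<in> induced_edges G S"
    then obtain u v where e: "e = {u, v}" "u \<in> S" "v \<in> S" "G u v"
      unfolding induced_edges_def by auto
    have uv: "u \<noteq> v" using G e(4) unfolding simple_graph_def by auto
    have vu: "G v u" using G e(4) unfolding simple_graph_def by auto
    have "{p \<in> D. {fst p, snd p} = e} = {(u,v),(v,u)}"
      using e vu unfolding D_def by (auto simp: doubleton_eq_iff)
    then show "(\<Sum>p\<in>{p \<in> D. {fst p, snd p} = e}. 1) = (2::real)" using uv by simp
  qed
  finally show ?thesis by simp
qed

lemma bip_bound:
  fixes G :: "'v::finite \<Rightarrow> 'v \<Rightarrow> bool"
  assumes G: "simple_graph G" and ne: "S \<noteq> {}" and bip: "induced_bipartite G S"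
  shows "min_eig G \<le> - avg_degree G S"
proof -
  obtain A B where AB: "A \<inter> B = {}" "A \<union> B = S" "\<forall>u\<in>A. \<forall>v\<in>A. \<not> G u v" "\<forall>u\<in>B. \<forall>v\<in>B. \<not> G u v"
    using bip unfolding induced_bipartite_def by blast
  define f :: "'v \<Rightarrow> real" where "f u = (if u \<in> A then 1 else if u \<in> B then -1 else 0)" for u
  have cS: "card S > 0" using ne by (simp add: card_gt_0_iff)
  have eqf: "(\<lambda>u. (f u)^2) = (\<lambda>u. if u \<in> S then 1 else 0)"
    using AB by (auto simp: f_def fun_eq_iff)
  have nf: "(\<Sum>u\<in>UNIV. (f u)^2) = real (card S)"
    unfolding eqf by (simp add: sum.If_cases)
  have "Qs G UNIV f = - Qs G UNIV (\<lambda>u. if u \<in> S then 1 else 0)"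
    unfolding Qs_def sum_negf[symmetric]
    by (intro sum.cong refl) (use AB in \<open>auto simp: f_def\<close>)
  also have "\<dots> = - Qs G S (\<lambda>_. 1)" by (simp add: Qs_restrict[of G S])
  also have "\<dots> = - 2 * real (card (induced_edges G S))" using count_edges[OF G] by simp
  finally have q: "Qs G UNIV f = - 2 * real (card (induced_edges G S))" .
  have "min_eig G * real (card S) \<le> - 2 * real (card (induced_edges G S))"
    using graph_min_eig(1)[OF G] nf q by metis
  then show ?thesis using cS unfolding avg_degree_def by (simp add: field_simps)
qed

lemma iota_props:
  fixes G :: "'v::finite \<Rightarrow> 'v \<Rightarrow> bool"
  assumes G: "simple_graph G"
  shows "\<And>S. S \<noteq> {} \<Longrightarrow> induced_bipartite G S \<Longrightarrow> avg_degree G S \<le> iota G"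
    and "\<exists>S. S \<noteq> {} \<and> induced_bipartite G S \<and> iota G = avg_degree G S"
proof -
  define X where "X = {avg_degree G S | S. S \<noteq> {} \<and> induced_bipartite G S}"
  have fX: "finite X" unfolding X_def
    by (rule finite_subset[of _ "(\<lambda>S. avg_degree G S) ` UNIV"]) auto
  obtain v :: 'v where True by auto
  have "induced_bipartite G {v}" unfolding induced_bipartite_def
    using G by (intro exI[of _ "{v}"] exI[of _ "{}"]) (auto simp: simple_graph_def)
  then have neX: "X \<noteq> {}" unfolding X_def by blast
  show "\<And>S. S \<noteq> {} \<Longrightarrow> induced_bipartite G S \<Longrightarrow> avg_degree G S \<le> iota G"
    unfolding iota_def using fX X_def by (intro Max_ge) auto
  have "iota G \<in> X" unfolding iota_def X_def[symmetric] using fX neX by (rule Max_in)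
  then show "\<exists>S. S \<noteq> {} \<and> induced_bipartite G S \<and> iota G = avg_degree G S"
    unfolding X_def by auto
qed

lemma min_eig_le_iota:
  fixes G :: "'v::finite \<Rightarrow> 'v \<Rightarrow> bool"
  assumes G: "simple_graph G"
  shows "min_eig G \<le> - iota G"
  using iota_props(2)[OF G] bip_bound[OF G] by force

lemma sum_prod_split: "(\<Sum>p\<in>A \<times> B. g p) = (\<Sum>a\<in>A. \<Sum>b\<in>B. g (a,b))"
  by (simp add: sum.cartesian_product)

lemma sum_if_const: "(\<Sum>x\<in>A. if c then g x else 0) = (if c then sum g A else (0::real))"
  by simp

lemma Qs_prod:
  fixes G1 :: "'a \<Rightarrow> 'a \<Rightarrow> bool" and G2 :: "'b \<Rightarrow> 'b \<Rightarrow> bool"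
  assumes i1: "\<And>v. \<not> G1 v v" and i2: "\<And>v. \<not> G2 v v"
    and S1: "finite S1" and S2: "finite S2"
  shows "Qs (cart_prod G1 G2) (S1 \<times> S2) f
     = (\<Sum>a\<in>S1. Qs G2 S2 (\<lambda>b. f (a,b))) + (\<Sum>b\<in>S2. Qs G1 S1 (\<lambda>a. f (a,b)))"
proof -
  let ?P = "cart_prod G1 G2"
  have "Qs ?P (S1 \<times> S2) f = (\<Sum>a\<in>S1. \<Sum>b\<in>S2. \<Sum>a'\<in>S1. \<Sum>b'\<in>S2.
      if ?P (a,b) (a',b') then f (a,b) * f (a',b') else 0)"
    unfolding Qs_def sum_prod_split by simp
  also have "\<dots> = (\<Sum>a\<in>S1. \<Sum>b\<in>S2. \<Sum>a'\<in>S1. \<Sum>b'\<in>S2.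
      (if a = a' then (if G2 b b' then f (a,b) * f (a',b') else 0) else 0)
      + (if b = b' then (if G1 a a' then f (a,b) * f (a',b') else 0) else 0))"
    by (intro sum.cong refl) (auto simp: cart_prod_def i1 i2)
  also have "\<dots> = (\<Sum>a\<in>S1. \<Sum>b\<in>S2. \<Sum>b'\<in>S2. if G2 b b' then f (a,b) * f (a,b') else 0)
     + (\<Sum>a\<in>S1. \<Sum>b\<in>S2. \<Sum>a'\<in>S1. if G1 a a' then f (a,b) * f (a',b) else 0)"
    unfolding sum.distrib using S1 S2 by (simp add: sum_if_const sum.delta' cong: sum.cong)
  also have "(\<Sum>a\<in>S1. \<Sum>b\<in>S2. \<Sum>a'\<in>S1. if G1 a a' then f (a,b) * f (a',b) else 0)
     = (\<Sum>b\<in>S2. \<Sum>a\<in>S1. \<Sum>a'\<in>S1. if G1 a a' then f (a,b) * f (a',b) else 0)"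
    by (rule sum.swap)
  finally show ?thesis unfolding Qs_def .
qed

lemma frac_aux: "(c1::real) > 0 \<Longrightarrow> c2 > 0 \<Longrightarrow> (c1*q2 + c2*q1)/(c1*c2) = q1/c1 + q2/c2"
  by (simp add: field_simps)

lemma avg_Qs:
  assumes "simple_graph G" "finite S"
  shows "avg_degree G S = Qs G S (\<lambda>_. 1) / real (card S)"
  using count_edges[OF assms] unfolding avg_degree_def by simp

theorem proposition3p1:
  fixes G1 :: "'a::finite \<Rightarrow> 'a \<Rightarrow> bool" and G2 :: "'b::finite \<Rightarrow> 'b \<Rightarrow> bool"
  assumes "simple_graph G1" and "simple_graph G2"
    and "CARD('a) \<ge> 2" and "CARD('b) \<ge> 2"
    and "min_eig G1 = - iota G1" and "min_eig G2 = - iota G2"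
  shows "min_eig (cart_prod G1 G2) = - iota (cart_prod G1 G2)"
proof -
  note g1 = assms(1) and g2 = assms(2)
  let ?P = "cart_prod G1 G2"
  have i1: "\<And>v. \<not> G1 v v" and i2: "\<And>v. \<not> G2 v v"
    using g1 g2 unfolding simple_graph_def by auto
  have gP: "simple_graph ?P"
    using g1 g2 unfolding simple_graph_def cart_prod_def by auto
  let ?l1 = "min_eig G1" and ?l2 = "min_eig G2" and ?lP = "min_eig ?P"
  have A: "?l1 + ?l2 \<le> ?lP"
  proof -
    obtain f where nf: "(\<Sum>p\<in>UNIV. (f p)^2) \<noteq> 0"
      and qf: "Qs ?P UNIV f = ?lP * (\<Sum>p\<in>UNIV. (f p)^2)"
      using graph_min_eig(2)[OF gP] by blast
    have pos: "(\<Sum>p\<in>UNIV. (f p)^2) > 0"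
      using nf sum_nonneg[of UNIV "\<lambda>p. (f p)^2"] by (simp add: less_le)
    have "Qs ?P UNIV f = (\<Sum>a\<in>UNIV. Qs G2 UNIV (\<lambda>b. f (a,b))) + (\<Sum>b\<in>UNIV. Qs G1 UNIV (\<lambda>a. f (a,b)))"
      using Qs_prod[of G1 G2 UNIV UNIV f, OF i1 i2] by (simp add: UNIV_Times_UNIV)
    also have "\<dots> \<ge> (\<Sum>a\<in>UNIV. ?l2 * (\<Sum>b\<in>UNIV. (f (a,b))^2)) + (\<Sum>b\<in>UNIV. ?l1 * (\<Sum>a\<in>UNIV. (f (a,b))^2))"
      using graph_min_eig(1)[OF g1] graph_min_eig(1)[OF g2]
      by (intro add_mono sum_mono) auto
    also have "(\<Sum>a\<in>UNIV. ?l2 * (\<Sum>b\<in>UNIV. (f (a,b))^2)) + (\<Sum>b\<in>UNIV. ?l1 * (\<Sum>a\<in>UNIV. (f (a,b))^2))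
        = (?l1 + ?l2) * (\<Sum>p\<in>UNIV. (f p)^2)"
    proof -
      have e: "(\<Sum>p\<in>UNIV. (f p)^2) = (\<Sum>a\<in>UNIV. \<Sum>b\<in>UNIV. (f (a,b))^2)"
        using sum_prod_split[of "\<lambda>p. (f p)^2" UNIV UNIV] by (simp add: UNIV_Times_UNIV)
      have e2: "(\<Sum>b\<in>UNIV. \<Sum>a\<in>UNIV. (f (a,b))^2) = (\<Sum>a\<in>UNIV. \<Sum>b\<in>UNIV. (f (a,b))^2)"
        by (rule sum.swap)
      show ?thesis unfolding e sum_distrib_left[symmetric] e2 by (simp add: algebra_simps)
    qed
    finally have "(?l1 + ?l2) * (\<Sum>p\<in>UNIV. (f p)^2) \<le> ?lP * (\<Sum>p\<in>UNIV. (f p)^2)"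
      using qf by simp
    then show ?thesis using pos by simp
  qed
  obtain S1 where S1: "S1 \<noteq> {}" "induced_bipartite G1 S1" "iota G1 = avg_degree G1 S1"
    using iota_props(2)[OF g1] by blast
  obtain S2 where S2: "S2 \<noteq> {}" "induced_bipartite G2 S2" "iota G2 = avg_degree G2 S2"
    using iota_props(2)[OF g2] by blast
  have neS: "S1 \<times> S2 \<noteq> {}" using S1 S2 by simp
  have bipS: "induced_bipartite ?P (S1 \<times> S2)"
  proof -
    obtain A1 B1 where AB1: "A1 \<inter> B1 = {}" "A1 \<union> B1 = S1" "\<forall>u\<in>A1. \<forall>v\<in>A1. \<not> G1 u v" "\<forall>u\<in>B1. \<forall>v\<in>B1. \<not> G1 u v"
      using S1(2) unfolding induced_bipartite_def by blast
    obtain A2 B2 where AB2: "A2 \<inter> B2 = {}" "A2 \<union> B2 = S2" "\<forall>u\<in>A2. \<forall>v\<in>A2. \<not> G2 u v" "\<forall>u\<in>B2. \<forall>v\<in>B2. \<not> G2 u v"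
      using S2(2) unfolding induced_bipartite_def by blast
    show ?thesis unfolding induced_bipartite_def
      apply (rule exI[of _ "A1 \<times> A2 \<union> B1 \<times> B2"], rule exI[of _ "A1 \<times> B2 \<union> B1 \<times> A2"])
      using AB1 AB2 by (auto simp: cart_prod_def)
  qed
  have avgS: "avg_degree ?P (S1 \<times> S2) = iota G1 + iota G2"
  proof -
    have f1: "finite S1" "finite S2" by auto
    have c1: "card S1 > 0" and c2: "card S2 > 0" using S1(1) S2(1) f1 by (auto simp: card_gt_0_iff)
    have eq: "Qs ?P (S1 \<times> S2) (\<lambda>_. 1) = real (card S1) * Qs G2 S2 (\<lambda>_. 1) + real (card S2) * Qs G1 S1 (\<lambda>_. 1)"
      using Qs_prod[of G1 G2 S1 S2 "\<lambda>_. 1", OF i1 i2 f1] by simp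
    have r1: "real (card S1) > 0" and r2: "real (card S2) > 0" using c1 c2 by auto
    have "avg_degree ?P (S1 \<times> S2) = (real (card S1) * Qs G2 S2 (\<lambda>_. 1) + real (card S2) * Qs G1 S1 (\<lambda>_. 1))
        / (real (card S1) * real (card S2))"
      unfolding avg_Qs[OF gP finite] eq card_cartesian_product of_nat_mult ..
    also have "\<dots> = Qs G1 S1 (\<lambda>_. 1) / real (card S1) + Qs G2 S2 (\<lambda>_. 1) / real (card S2)"
      by (rule frac_aux[OF r1 r2])
    also have "\<dots> = iota G1 + iota G2"
      unfolding S1(3) S2(3) avg_Qs[OF g1 f1(1)] avg_Qs[OF g2 f1(2)] ..
    finally show ?thesis .
  qed
  have B: "iota G1 + iota G2 \<le> iota ?P"
    using iota_props(1)[OF gP neS bipS] avgS by simp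
  have C: "?lP \<le> - iota ?P" by (rule min_eig_le_iota[OF gP])
  show ?thesis using A B C assms(5,6) by linarith
qed
end
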